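(* Let $M>0$, $\beta^*>0$, and let $g$ be the log-normal density $g(t)=\frac{1}{t\sigma\sqrt{2\pi}}\exp\!\big(-\frac{(\ln t-\mu)^2}{2\sigma^2}\big)$ for $t>0$, $g(t)=0$ for $t\le0$ ($\mu\in\mathbb{R}$, $\sigma>0$). Let $I$ be the unique $C^1$ solution on $[0,\infty)$ of \[ I'(t)=\beta^*(M-I(t))\Big(I(t)-\int_0^t g(t-s)I(s)\,ds\Big),\qquad I(0)=I_0\in[0,M]. \] Then: (1) if $I_0>0$ then $I(t)>0$ for all $t$, and if $I_0=0$ then $I\equiv0$; (2) if $I_0<M$ then $I(t)<M$ for all $t$, and if $I_0=M$ then $I\equiv M$. *)

theory Defs
  imports "HOL-Analysis.Analysis"
begin

definition lognormal_density :: "real \<Rightarrow> real \<Rightarrow> real \<Rightarrow> real" where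
  "lognormal_density \<mu> \<sigma> t =
     (if t > 0 then exp (- ((ln t - \<mu>)^2) / (2 * \<sigma>^2)) / (t * \<sigma> * sqrt (2 * pi))
      else 0)"

end

theory Submission
  imports Defs "HOL-Probability.Distributions"
begin

lemma ln_nonneg: "\<sigma> > 0 \<Longrightarrow> 0 \<le> lognormal_density \<mu> \<sigma> t"
  unfolding lognormal_density_def by auto

lemma ln_le_lin:
  assumes s: "\<sigma> > 0" and t: "t > 0"
  shows "lognormal_density \<mu> \<sigma> t \<le> (exp (2*\<sigma>^2 - 2*\<mu>) / (\<sigma> * sqrt (2*pi))) * t"
proof -
  define x where "x = ln t"
  have tx: "t = exp x" using t x_def by simp
  have q: "- ((x - \<mu>)^2) / (2 * \<sigma>^2) \<le> 2*\<sigma>^2 - 2*\<mu> + 2*x"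
  proof -
    have "0 \<le> ((x - \<mu>) + 2*\<sigma>^2)^2" by simp
    hence "0 \<le> (x-\<mu>)^2 + 4*\<sigma>^2*(x-\<mu>) + 4*\<sigma>^2*\<sigma>^2" by (simp add: power2_eq_square algebra_simps)
    hence a: "- ((x - \<mu>)^2) \<le> (2*\<sigma>^2 - 2*\<mu> + 2*x) * (2*\<sigma>^2)" by (simp add: power2_eq_square algebra_simps)
    have "2*\<sigma>^2 > 0" using s by simp
    thus ?thesis using a by (simp only: divide_le_eq) simp
  qed
  have "exp (- ((x - \<mu>)^2) / (2 * \<sigma>^2)) \<le> exp (2*\<sigma>^2 - 2*\<mu> + 2*x)"
    using q by simp
  also have "\<dots> = exp (2*\<sigma>^2 - 2*\<mu>) * (t * t)" by (simp add: tx exp_add[symmetric])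
  finally have e: "exp (- ((x - \<mu>)^2) / (2 * \<sigma>^2)) \<le> exp (2*\<sigma>^2 - 2*\<mu>) * (t * t)" .
  moreover have pos: "t * \<sigma> * sqrt (2*pi) > 0" using s t by simp
  ultimately show ?thesis using t s
    unfolding lognormal_density_def x_def
    by (simp add: divide_le_eq field_simps)
qed

lemma ln_cont:
  assumes s: "\<sigma> > 0"
  shows "isCont (lognormal_density \<mu> \<sigma>) x"
proof -
  define C where "C = exp (2*\<sigma>^2 - 2*\<mu>) / (\<sigma> * sqrt (2*pi))"
  consider "x > 0" | "x < 0" | "x = 0" by linarith
  then show ?thesis
  proof cases
    case 1
    have ev: "eventually (\<lambda>y. lognormal_density \<mu> \<sigma> y = exp (- ((ln y - \<mu>)^2) / (2 * \<sigma>^2)) / (y * \<sigma> * sqrt (2 * pi))) (nhds x)"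
      using eventually_nhds_in_open[of "{0<..}" x] 1
      by (auto elim!: eventually_mono simp: lognormal_density_def)
    show ?thesis
      apply (subst isCont_cong[OF ev])
      using 1 s by (intro continuous_intros) auto
  next
    case 2
    have ev: "eventually (\<lambda>y. lognormal_density \<mu> \<sigma> y = 0) (nhds x)"
      using eventually_nhds_in_open[of "{..<0}" x] 2
      by simp (elim eventually_mono, simp add: lognormal_density_def)
    show ?thesis
      by (subst isCont_cong[OF ev]) simp
  next
    case 3
    have b: "norm (lognormal_density \<mu> \<sigma> y) \<le> C * \<bar>y\<bar>" for y
    proof (cases "y > 0")
      case True thus ?thesis using ln_le_lin[OF s True, of \<mu>] ln_nonneg[OF s, of \<mu> y] unfolding C_def by simp
    next
      case False
      have "C \<ge> 0" unfolding C_def using s by simp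
      thus ?thesis using False by (simp add: lognormal_density_def mult_nonneg_nonpos)
    qed
    have "((\<lambda>y. C * \<bar>y\<bar>) \<longlongrightarrow> 0) (at 0)"
      by (rule tendsto_eq_intros) (auto intro!: tendsto_eq_intros)
    hence "((lognormal_density \<mu> \<sigma>) \<longlongrightarrow> 0) (at 0)"
      by (rule Lim_null_comparison[rotated]) (use b in \<open>auto intro!: always_eventually\<close>)
    thus ?thesis using 3 unfolding isCont_def by (simp add: lognormal_density_def)
  qed
qed

lemma ln_contg: "\<sigma> > 0 \<Longrightarrow> continuous_on S (lognormal_density \<mu> \<sigma>)"
  by (simp add: continuous_at_imp_continuous_on ln_cont)

lemma ln_int: "\<sigma> > 0 \<Longrightarrow> lognormal_density \<mu> \<sigma> integrable_on {a..b}"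
  by (simp add: integrable_continuous_interval ln_contg)

lemma ln_sub:
  assumes s: "\<sigma> > 0" and a: "0 < a" "a \<le> t"
  shows "integral {a..t} (lognormal_density \<mu> \<sigma>) = integral {ln a..ln t} (normal_density \<mu> \<sigma>)"
proof -
  have "((\<lambda>x. exp x *\<^sub>R lognormal_density \<mu> \<sigma> (exp x)) has_integral
     integral {exp (ln a)..exp (ln t)} (lognormal_density \<mu> \<sigma>)) {ln a..ln t}"
    using a exp_le_cancel_iff[of "ln a"] exp_ln[of a]
    by (intro has_integral_substitution[where c=a and d=t]) 
      (auto intro!: ln_contg s derivative_eq_intros simp: ln_ge_iff simp del: exp_le_cancel_iff)
  moreover have "exp x *\<^sub>R lognormal_density \<mu> \<sigma> (exp x) = normal_density \<mu> \<sigma> x" for x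
    using s by (simp add: lognormal_density_def normal_density_def real_sqrt_mult)
  ultimately show ?thesis using a by (simp add: integral_unique)
qed

lemma nd_int_le: "\<sigma> > 0 \<Longrightarrow> integral {a..b} (normal_density \<mu> \<sigma>) \<le> 1"
proof -
  assume s: "\<sigma> > 0"
  have c: "continuous_on {a..b} (normal_density \<mu> \<sigma>)"
    using s by (simp add: normal_density_def[abs_def]) (intro continuous_intros, use pi_gt_zero in auto)
  have "integral {a..b} (normal_density \<mu> \<sigma>) \<le> integral UNIV (normal_density \<mu> \<sigma>)"
    by (rule integral_subset_le) (auto intro!: integrable_on_lborel integrable_continuous_interval c integrable_normal_density s)
  also have "\<dots> = 1" using s by (simp add: integral_lborel integrable_normal_density)
  finally show ?thesis .
qed

lemma ln_mass_le:
  assumes s: "\<sigma> > 0" and t: "0 \<le> t"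
  shows "integral {0..t} (lognormal_density \<mu> \<sigma>) \<le> 1"
proof (cases "t = 0")
  case True thus ?thesis by simp
next
  case False
  with t have t: "t > 0" by simp
  define C where "C = exp (2*\<sigma>^2 - 2*\<mu>) / (\<sigma> * sqrt (2*pi))"
  have C: "C \<ge> 0" unfolding C_def using s by simp
  have key: "integral {0..t} (lognormal_density \<mu> \<sigma>) \<le> 1 + C * t * a" if a: "0 < a" "a \<le> t" for a
  proof -
    have "integral {0..t} (lognormal_density \<mu> \<sigma>) = integral {0..a} (lognormal_density \<mu> \<sigma>) + integral {a..t} (lognormal_density \<mu> \<sigma>)"
      using a Henstock_Kurzweil_Integration.integral_combine[where a=0 and c=a and b=t and f="lognormal_density \<mu> \<sigma>"] ln_int[OF s] by simp
    also have "integral {0..a} (lognormal_density \<mu> \<sigma>) \<le> integral {0..a} (\<lambda>_. C * t)"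
    proof (rule integral_le[OF ln_int[OF s]])
      show "(\<lambda>_. C * t) integrable_on {0..a}" by (intro integrable_continuous_interval continuous_on_const)
      fix x assume x: "x \<in> {0..a}"
      show "lognormal_density \<mu> \<sigma> x \<le> C * t"
      proof (cases "x > 0")
        case True
        have "lognormal_density \<mu> \<sigma> x \<le> C * x" using ln_le_lin[OF s True] unfolding C_def by simp
        also have "\<dots> \<le> C * t" using x a C by (intro mult_left_mono) auto
        finally show ?thesis .
      next
        case False thus ?thesis using C t by (simp add: lognormal_density_def)
      qed
    qed
    also have "integral {0..a} (\<lambda>_. C * t) = C * t * a" using a by simp
    also have "integral {a..t} (lognormal_density \<mu> \<sigma>) \<le> 1"
      using ln_sub[OF s a] nd_int_le[OF s] by simp
    finally show ?thesis by simp
  qed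
  show ?thesis
  proof (rule ccontr)
    assume "\<not> ?thesis"
    then obtain e where e: "e > 0" "integral {0..t} (lognormal_density \<mu> \<sigma>) = 1 + e"
      by (metis add.commute diff_add_cancel diff_gt_0_iff_gt not_le)
    define a where "a = min t (e / (2 * (C * t + 1)))"
    have a: "0 < a" "a \<le> t" unfolding a_def using t e C by (auto intro!: divide_pos_pos add_nonneg_pos)
    have "C * t * a \<le> C * t * (e / (2 * (C * t + 1)))"
      using C t a_def by (intro mult_left_mono) auto
    also have "\<dots> < e"
    proof -
      have D: "2 * (C * t + 1) > 0" using C t by (simp add: add_nonneg_pos)
      have n: "0 \<le> C * t * e" using C t e by simp
      have "2 * (C * t + 1) * e = 2 * (C * t * e) + 2 * e" by (simp add: algebra_simps)
      hence "C * t * e < e * (2 * (C * t + 1))" using n e by (simp only: mult.commute[of e])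
      hence "C * t * e / (2 * (C * t + 1)) < e" using D by (simp add: pos_divide_less_eq)
      thus ?thesis by simp
    qed
    finally show False using key[OF a] e by simp
  qed
qed

lemma int_pos:
  fixes f :: "real \<Rightarrow> real"
  assumes "a < b" "continuous_on {a..b} f" "\<And>x. x \<in> {a..b} \<Longrightarrow> f x > 0"
  shows "integral {a..b} f > 0"
proof -
  obtain x where x: "x \<in> {a..b}" "\<And>y. y \<in> {a..b} \<Longrightarrow> f x \<le> f y"
    using continuous_attains_inf[of "{a..b}" f] assms by auto
  have "integral {a..b} (\<lambda>_. f x) \<le> integral {a..b} f"
    using assms x by (intro integral_le) (auto intro: integrable_continuous_interval)
  moreover have "integral {a..b} (\<lambda>_. f x) > 0" using assms x by simp
  ultimately show ?thesis by simp
qed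

lemma ln_mass_lt:
  assumes s: "\<sigma> > 0" and t: "0 \<le> t"
  shows "integral {0..t} (lognormal_density \<mu> \<sigma>) < 1"
proof -
  let ?g = "lognormal_density \<mu> \<sigma>"
  have "integral {0..t+1} ?g = integral {0..t} ?g + integral {t..t+1} ?g"
    using t Henstock_Kurzweil_Integration.integral_combine[where a=0 and c=t and b="t+1" and f="?g"] ln_int[OF s] by simp
  moreover have "integral {t..t+1} ?g = integral {t..t+1/2} ?g + integral {t+1/2..t+1} ?g"
    using t Henstock_Kurzweil_Integration.integral_combine[where a=t and c="t+1/2" and b="t+1" and f="?g"] ln_int[OF s] by simp
  moreover have "integral {t..t+1/2} ?g \<ge> 0"
    by (intro integral_nonneg ln_int s ln_nonneg) 
  moreover have "integral {t+1/2..t+1} ?g > 0"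
    using t s by (intro int_pos ln_contg s) (auto simp: lognormal_density_def)
  moreover have "integral {0..t+1} ?g \<le> 1" using t by (intro ln_mass_le s) simp
  ultimately show ?thesis by linarith
qed

lemma ln_reflect:
  assumes s: "\<sigma> > 0"
  shows "integral {0..t} (\<lambda>x. lognormal_density \<mu> \<sigma> (t - x)) = integral {0..t} (lognormal_density \<mu> \<sigma>)"
proof -
  have r: "integral {0..t} (\<lambda>x. lognormal_density \<mu> \<sigma> (-x + t)) = integral {-t..0} (\<lambda>y. lognormal_density \<mu> \<sigma> (y + t))"
    using Henstock_Kurzweil_Integration.integral_reflect_real[of 0 "-t" "\<lambda>y. lognormal_density \<mu> \<sigma> (y + t)"] by simp
  have sh: "integral {-t..0} (lognormal_density \<mu> \<sigma> \<circ> (\<lambda>y. y + t)) = integral {-t+t..0+t} (lognormal_density \<mu> \<sigma>)"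
    by (rule integral_shift) (rule ln_contg[OF s])
  show ?thesis using r sh by (simp add: o_def algebra_simps)
qed

lemma zero_lemma:
  fixes f f' :: "real \<Rightarrow> real"
  assumes R: "0 \<le> R" and L: "0 \<le> L" and f0: "f 0 = 0"
    and cont: "continuous_on {0..R} f"
    and der: "\<And>t. 0 < t \<Longrightarrow> t < R \<Longrightarrow> (f has_real_derivative f' t) (at t)"
    and bnd: "\<And>t m. 0 \<le> t \<Longrightarrow> t \<le> R \<Longrightarrow> (\<And>s. 0 \<le> s \<Longrightarrow> s \<le> t \<Longrightarrow> \<bar>f s\<bar> \<le> m) \<Longrightarrow> \<bar>f' t\<bar> \<le> L * m"
    and t: "0 \<le> t" "t \<le> R"
  shows "f t = 0"
proof -
  define d where "d = 1 / (2 * L + 2)"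
  have d: "d > 0" unfolding d_def using L by simp
  have Ld: "L * d \<le> 1/2" unfolding d_def using L by (simp add: field_simps)
  have step: "\<forall>t. 0 \<le> t \<longrightarrow> t \<le> min R (real n * d) \<longrightarrow> f t = 0" for n
  proof (induction n)
    case 0 thus ?case using f0 by auto
  next
    case (Suc n)
    define a where "a = min R (real n * d)"
    define b where "b = min R (real (Suc n) * d)"
    have a0: "0 \<le> a" unfolding a_def using R d by simp
    have ab: "a \<le> b" unfolding a_def b_def using d by (auto simp: min_def algebra_simps)
    have bR: "b \<le> R" unfolding b_def by simp
    have contb: "continuous_on {0..b} (\<lambda>x. \<bar>f x\<bar>)"
      using cont bR by (intro continuous_intros) (auto elim: continuous_on_subset)
    obtain s where s: "s \<in> {0..b}" "\<And>y. y \<in> {0..b} \<Longrightarrow> \<bar>f y\<bar> \<le> \<bar>f s\<bar>"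
      using continuous_attains_sup[OF compact_Icc _ contb] a0 ab by fastforce
    have fs: "f s = 0"
    proof (cases "s \<le> a")
      case True thus ?thesis using Suc.IH s(1) unfolding a_def by auto
    next
      case False
      hence as: "a < s" by simp
      have fa: "f a = 0" using Suc.IH a0 unfolding a_def by auto
      have "\<exists>l z. a < z \<and> z < s \<and> DERIV f z :> l \<and> f s - f a = (s - a) * l"
      proof (rule MVT[OF as])
        show "continuous_on {a..s} f" using cont s bR a0 by (auto elim: continuous_on_subset)
        fix x assume "a < x" "x < s"
        thus "f differentiable (at x)" using der[of x] a0 s bR real_differentiable_def by force
      qed
      then obtain l z where z: "a < z" "z < s" "DERIV f z :> l" "f s - f a = (s - a) * l" by blast
      have l: "l = f' z" using DERIV_unique[OF z(3) der[of z]] z a0 s bR by auto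
      have fz: "\<bar>f' z\<bar> \<le> L * \<bar>f s\<bar>"
        using z a0 s bR by (intro bnd) auto
      have "a = real n * d"
        using as s bR unfolding a_def by (auto simp: min_def split: if_splits)
      moreover have "s \<le> real (Suc n) * d" using s unfolding b_def by auto
      ultimately have sa: "s - a \<le> d" by (simp add: algebra_simps)
      have "\<bar>f s\<bar> = (s - a) * \<bar>l\<bar>" using z(4) fa as by (simp add: abs_mult)
      also have "\<dots> \<le> d * (L * \<bar>f s\<bar>)" using sa as fz l by (intro mult_mono) auto
      also have "\<dots> = (L * d) * \<bar>f s\<bar>" by simp
      also have "\<dots> \<le> (1/2) * \<bar>f s\<bar>" using Ld by (intro mult_right_mono) auto
      finally show ?thesis by simp
    qed
    show ?case
    proof (intro allI impI)
      fix t assume "0 \<le> t" "t \<le> min R (real (Suc n) * d)"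
      hence "\<bar>f t\<bar> \<le> \<bar>f s\<bar>" using s(2)[of t] unfolding b_def by auto
      thus "f t = 0" using fs by simp
    qed
  qed
  obtain n where n: "R / d < real n" using reals_Archimedean2 by blast
  hence "R \<le> real n * d" using d by (simp add: field_simps)
  thus ?thesis using step[of n] t by auto
qed

lemma cont_bnd:
  fixes f :: "real \<Rightarrow> real"
  assumes "continuous_on {a..b} f"
  obtains K where "K \<ge> 0" "\<And>x. x \<in> {a..b} \<Longrightarrow> \<bar>f x\<bar> \<le> K"
proof -
  have "bounded (f ` {a..b})"
    by (rule compact_imp_bounded[OF compact_continuous_image[OF assms compact_Icc]])
  then obtain K where "\<forall>y\<in>f ` {a..b}. \<bar>y\<bar> \<le> K" unfolding bounded_real by blast
  hence "\<And>x. x \<in> {a..b} \<Longrightarrow> \<bar>f x\<bar> \<le> max 0 K" by force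
  thus ?thesis using that[of "max 0 K"] by simp
qed

theorem proposition3p5:
  fixes M \<beta> \<mu> \<sigma> I0 :: real and I I' :: "real \<Rightarrow> real"
  assumes M_pos: "M > 0" and beta_pos: "\<beta> > 0" and sigma_pos: "\<sigma> > 0"
    and I0_range: "0 \<le> I0" "I0 \<le> M"
    and deriv: "\<And>t. t \<ge> 0 \<Longrightarrow> (I has_real_derivative I' t) (at t within {0..})"
    and C1: "continuous_on {0..} I'"
    and ode: "\<And>t. t \<ge> 0 \<Longrightarrow>
       I' t = \<beta> * (M - I t) * (I t - integral {0..t} (\<lambda>s. lognormal_density \<mu> \<sigma> (t - s) * I s))"
    and init: "I 0 = I0"
  shows "(I0 > 0 \<longrightarrow> (\<forall>t\<ge>0. I t > 0)) \<and> (I0 = 0 \<longrightarrow> (\<forall>t\<ge>0. I t = 0)) \<and>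
         (I0 < M \<longrightarrow> (\<forall>t\<ge>0. I t < M)) \<and> (I0 = M \<longrightarrow> (\<forall>t\<ge>0. I t = M))"
proof -
  let ?g = "lognormal_density \<mu> \<sigma>"
  define conv where "conv t = integral {0..t} (\<lambda>s. ?g (t - s) * I s)" for t
  have odec: "I' t = \<beta> * (M - I t) * (I t - conv t)" if "t \<ge> 0" for t
    using ode[OF that] unfolding conv_def .
  have contI: "continuous_on {0..} I"
    using deriv DERIV_continuous continuous_on_eq_continuous_within by fastforce
  have contIt: "continuous_on {a..b} I" if "0 \<le> a" for a b
    using contI that by (auto elim: continuous_on_subset)
  have derI: "(I has_real_derivative I' t) (at t)" if "0 < t" for t
  proof -
    have "at t within {0..} = at t" using that by (intro at_within_interior) simp
    thus ?thesis using deriv[of t] that by simp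
  qed
  have gcomp: "continuous_on S (\<lambda>s. ?g (t - s))" for S t
    by (rule continuous_at_imp_continuous_on) (auto intro!: isCont_o2[OF _ ln_cont[OF sigma_pos]] continuous_intros)
  have gnn: "0 \<le> ?g x" for x using ln_nonneg[OF sigma_pos] .
  have int1: "(\<lambda>s. ?g (t - s) * I s) integrable_on {0..t}" for t
    by (intro integrable_continuous_interval continuous_intros gcomp contIt) simp
  have int2: "(\<lambda>s. c * ?g (t - s)) integrable_on {0..t}" for t c
    by (intro integrable_continuous_interval continuous_intros gcomp)
  have mass: "integral {0..t} (\<lambda>s. ?g (t - s)) < 1" if "0 \<le> t" for t
    using ln_reflect[OF sigma_pos] ln_mass_lt[OF sigma_pos that] by simp
  have conv_bound: "\<bar>conv t\<bar> \<le> m" if t: "0 \<le> t" and m: "\<And>s. 0 \<le> s \<Longrightarrow> s \<le> t \<Longrightarrow> \<bar>I s\<bar> \<le> m" for t m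
  proof -
    have m0: "0 \<le> m" using m[of 0] t by simp
    have "norm (conv t) \<le> integral {0..t} (\<lambda>s. m * ?g (t - s))"
      unfolding conv_def
    proof (rule Henstock_Kurzweil_Integration.integral_norm_bound_integral[OF int1 int2])
      fix s assume s: "s \<in> {0..t}"
      have "\<bar>?g (t - s) * I s\<bar> = ?g (t - s) * \<bar>I s\<bar>" using gnn by (simp add: abs_mult)
      also have "\<dots> \<le> ?g (t - s) * m" using m[of s] s gnn by (intro mult_left_mono) auto
      finally show "norm (?g (t - s) * I s) \<le> m * ?g (t - s)" by (simp add: mult.commute)
    qed
    also have "\<dots> = m * integral {0..t} (\<lambda>s. ?g (t - s))"
      by (rule integral_mult[symmetric]) (intro integrable_continuous_interval gcomp)
    also have "\<dots> \<le> m * 1" using mass[OF t] m0 by (intro mult_left_mono) auto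
    finally show ?thesis by simp
  qed

  have P2b: "I t = M" if IM: "I0 = M" and t: "0 \<le> t" for t
  proof -
    obtain K where K: "K \<ge> 0" "\<And>x. x \<in> {0..t} \<Longrightarrow> \<bar>I x\<bar> \<le> K"
      using cont_bnd[OF contIt[of 0 t]] by auto
    have "(\<lambda>x. M - I x) t = 0"
    proof (rule zero_lemma[where f="\<lambda>x. M - I x" and t=t and f'="\<lambda>x. - I' x" and L="2 * \<beta> * K" and R=t])
      show "0 \<le> t" "t \<le> t" "0 \<le> 2 * \<beta> * K" using t K beta_pos by auto
      show "M - I 0 = 0" using IM init by simp
      show "continuous_on {0..t} (\<lambda>x. M - I x)" by (intro continuous_intros contIt) simp
      fix x assume "0 < x" "x < t"
      thus "((\<lambda>x. M - I x) has_real_derivative - I' x) (at x)"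
        by (auto intro!: derivative_eq_intros derI)
    next
      fix x m assume x: "0 \<le> x" "x \<le> t" and m: "\<And>s. 0 \<le> s \<Longrightarrow> s \<le> x \<Longrightarrow> \<bar>M - I s\<bar> \<le> m"
      have cb: "\<bar>conv x\<bar> \<le> K" using K x by (intro conv_bound) auto
      have "\<bar>I x - conv x\<bar> \<le> 2 * K" using cb K(2)[of x] x by auto
      have "\<bar>- I' x\<bar> = \<beta> * \<bar>M - I x\<bar> * \<bar>I x - conv x\<bar>" using odec[OF x(1)] beta_pos by (simp add: abs_mult)
      also have "\<dots> \<le> \<beta> * m * (2 * K)"
        using m[of x] x \<open>\<bar>I x - conv x\<bar> \<le> 2 * K\<close> beta_pos
        by (intro mult_mono mult_left_mono) auto
      finally show "\<bar>- I' x\<bar> \<le> 2 * \<beta> * K * m" by (simp add: algebra_simps)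
    qed (use t in simp)
    thus ?thesis by simp
  qed

  have P1b: "I t = 0" if I00: "I0 = 0" and t: "0 \<le> t" for t
  proof -
    obtain K where K: "K \<ge> 0" "\<And>x. x \<in> {0..t} \<Longrightarrow> \<bar>M - I x\<bar> \<le> K"
    proof -
      have "continuous_on {0..t} (\<lambda>x. M - I x)" by (intro continuous_intros contIt) simp
      from cont_bnd[OF this] show ?thesis using that by blast
    qed
    show ?thesis
    proof (rule zero_lemma[where f=I and t=t and f'="I'" and L="2 * \<beta> * K" and R=t])
      show "0 \<le> t" "t \<le> t" "0 \<le> 2 * \<beta> * K" using t K beta_pos by auto
      show "I 0 = 0" using I00 init by simp
      show "continuous_on {0..t} I" by (intro contIt) simp
      fix x assume "0 < x" "x < t"
      thus "(I has_real_derivative I' x) (at x)" by (auto intro!: derI)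
    next
      fix x m assume x: "0 \<le> x" "x \<le> t" and m: "\<And>s. 0 \<le> s \<Longrightarrow> s \<le> x \<Longrightarrow> \<bar>I s\<bar> \<le> m"
      have cb: "\<bar>conv x\<bar> \<le> m" using m x by (intro conv_bound) auto
      have F: "\<bar>I x - conv x\<bar> \<le> 2 * m" using cb m[of x] x by auto
      have "\<bar>I' x\<bar> = \<beta> * \<bar>M - I x\<bar> * \<bar>I x - conv x\<bar>" using odec[OF x(1)] beta_pos by (simp add: abs_mult)
      also have "\<dots> \<le> \<beta> * K * (2 * m)"
        using K(2)[of x] x F beta_pos by (intro mult_mono mult_left_mono) auto
      finally show "\<bar>I' x\<bar> \<le> 2 * \<beta> * K * m" by (simp add: algebra_simps)
    qed (use t in simp)
  qed

  have P2a: "I t < M" if IM: "I0 < M" and t: "0 \<le> t" for t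
  proof (rule ccontr)
    assume "\<not> I t < M"
    define S where "S = {0..t} \<inter> I -` {M..}"
    have Sne: "S \<noteq> {}" using \<open>\<not> I t < M\<close> t unfolding S_def by auto
    have Scl: "closed S" unfolding S_def by (intro continuous_closed_preimage contIt) auto
    have Sbdd: "bdd_below S" unfolding S_def by (auto intro: bdd_belowI[of _ 0])
    define t1 where "t1 = Inf S"
    have t1S: "t1 \<in> S" unfolding t1_def by (rule closed_contains_Inf[OF Sne Sbdd Scl])
    hence t1: "0 \<le> t1" "t1 \<le> t" "M \<le> I t1" unfolding S_def by auto
    have below: "I x < M" if "0 \<le> x" "x < t1" for x
    proof (rule ccontr)
      assume "\<not> I x < M"
      hence "x \<in> S" using that t1 unfolding S_def by auto
      hence "t1 \<le> x" unfolding t1_def by (rule cInf_lower[OF _ Sbdd])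
      thus False using that by simp
    qed
    have t1pos: "0 < t1" using t1 init IM by (cases "t1 = 0") auto
    obtain K where K: "K \<ge> 0" "\<And>x. x \<in> {0..t1} \<Longrightarrow> \<bar>I x\<bar> \<le> K"
      using cont_bnd[OF contIt[of 0 t1]] by auto
    define A where "A = 2 * \<beta> * K"
    define w where "w x = (M - I x) * exp (A * x)" for x
    have "w 0 \<le> w t1"
    proof (rule DERIV_nonneg_imp_increasing_open[of 0 t1 w])
      show "0 \<le> t1" by fact
      show "continuous_on {0..t1} w" unfolding w_def by (intro continuous_intros contIt) simp
      fix x assume x: "0 < x" "x < t1"
      have d: "(w has_real_derivative (- I' x) * exp (A * x) + (M - I x) * (exp (A * x) * A)) (at x)"
        unfolding w_def using x by (auto intro!: derivative_eq_intros derI)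
      have cb: "\<bar>conv x\<bar> \<le> K" using K x by (intro conv_bound) auto
      have F: "\<beta> * (I x - conv x) \<le> A"
      proof -
        have "\<bar>I x - conv x\<bar> \<le> 2 * K" using cb K(2)[of x] x by auto
        hence "I x - conv x \<le> 2 * K" by simp
        thus ?thesis unfolding A_def using beta_pos by (simp add: mult_left_mono)
      qed
      have pos: "0 < M - I x" using below[of x] x by simp
      have "- I' x + (M - I x) * A = (M - I x) * (A - \<beta> * (I x - conv x))"
        using odec[of x] x by (simp add: algebra_simps)
      also have "\<dots> \<ge> 0" using pos F by simp
      finally have nn: "0 \<le> - I' x + (M - I x) * A" .
      have "(- I' x) * exp (A * x) + (M - I x) * (exp (A * x) * A) = exp (A * x) * (- I' x + (M - I x) * A)"
        by (simp add: algebra_simps)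
      hence "0 \<le> (- I' x) * exp (A * x) + (M - I x) * (exp (A * x) * A)"
        using nn by simp
      thus "\<exists>y. (w has_real_derivative y) (at x) \<and> 0 \<le> y" using d by blast
    qed
    moreover have "w 0 > 0" unfolding w_def using init IM by simp
    moreover have "w t1 \<le> 0" unfolding w_def using t1 by (simp add: mult_nonpos_nonneg)
    ultimately show False by simp
  qed

  have P1a: "I t > 0" if I0p: "I0 > 0" and t: "0 \<le> t" for t
  proof (cases "I0 = M")
    case True thus ?thesis using P2b[OF True t] M_pos by simp
  next
    case False
    hence IM: "I0 < M" using I0_range by simp
    have ltM: "I x < M" if "0 \<le> x" for x using P2a[OF IM that] .
    define S where "S = {0..t} \<inter> I' -` {..0}"
    have mono: "I a \<le> I b" if "0 \<le> a" "a \<le> b" "\<And>x. a < x \<Longrightarrow> x < b \<Longrightarrow> I' x > 0" for a b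
    proof (rule DERIV_nonneg_imp_increasing_open[OF that(2)])
      show "continuous_on {a..b} I" using that by (intro contIt) 
      fix x assume "a < x" "x < b"
      thus "\<exists>y. (I has_real_derivative y) (at x) \<and> 0 \<le> y"
        using that derI[of x] by (intro exI[of _ "I' x"]) force
    qed
    show ?thesis
    proof (cases "S = {}")
      case True
      hence "I' x > 0" if "0 \<le> x" "x \<le> t" for x using that unfolding S_def by force
      hence "I 0 \<le> I t" using t by (intro mono) auto
      thus ?thesis using init I0p by simp
    next
      case Sne: False
      have Scl: "closed S" unfolding S_def
        by (intro continuous_closed_preimage) (auto intro: continuous_on_subset[OF C1])
      have Sbdd: "bdd_below S" unfolding S_def by (auto intro: bdd_belowI[of _ 0])
      define t1 where "t1 = Inf S"
      have t1S: "t1 \<in> S" unfolding t1_def by (rule closed_contains_Inf[OF Sne Sbdd Scl])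
      hence t1: "0 \<le> t1" "t1 \<le> t" "I' t1 \<le> 0" unfolding S_def by auto
      have below: "I' x > 0" if "0 \<le> x" "x < t1" for x
      proof (rule ccontr)
        assume "\<not> I' x > 0"
        hence "x \<in> S" using that t1 unfolding S_def by auto
        hence "t1 \<le> x" unfolding t1_def by (rule cInf_lower[OF _ Sbdd])
        thus False using that by simp
      qed
      have I'0: "I' 0 > 0"
      proof -
        have "conv 0 = 0" unfolding conv_def by simp
        thus ?thesis using odec[of 0] init I0p IM beta_pos by simp
      qed
      have t1pos: "0 < t1" using t1 I'0 by (cases "t1 = 0") auto
      have Ile: "I s \<le> I t1" if "0 \<le> s" "s \<le> t1" for s
        using that below by (intro mono) auto
      have Ige: "I0 \<le> I s" if "0 \<le> s" "s \<le> t1" for s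
        using that below init mono[of 0 s] by auto
      have It1: "I t1 > 0" using Ige[of t1] t1 I0p by simp
      have "conv t1 \<le> integral {0..t1} (\<lambda>s. I t1 * ?g (t1 - s))"
        unfolding conv_def
      proof (rule integral_le[OF int1 int2])
        fix s assume s: "s \<in> {0..t1}"
        show "?g (t1 - s) * I s \<le> I t1 * ?g (t1 - s)"
          using Ile[of s] s gnn[of "t1 - s"] by (simp add: mult.commute mult_right_mono)
      qed
      also have "\<dots> = I t1 * integral {0..t1} (\<lambda>s. ?g (t1 - s))"
        by (rule integral_mult[symmetric]) (intro integrable_continuous_interval gcomp)
      also have "\<dots> < I t1 * 1" using mass[OF t1(1)] It1 by (intro mult_strict_left_mono) auto
      finally have "conv t1 < I t1" by simp
      hence "I' t1 > 0" using odec[OF t1(1)] ltM[OF t1(1)] beta_pos by simp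
      thus ?thesis using t1 by simp
    qed
  qed
  show ?thesis using P1a P1b P2a P2b by auto
qed

end
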